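(* Let $G$ be a connected graph of order $n\geq 2$ and let $H$ be a connected graph of order $m\geq 1$. (1) If $0\leq g\leq m-1$, then $\kappa_g(G*H)=1$. (2) Let $k\geq 1$ be an integer such that $G$ has at least one $R_k$-cutset, and let $g$ be an integer with $k(m+1)<g+1\leq (k+1)(m+1)$. Then $G*H$ has an $R_g$-cutset and $$\kappa_g(G*H)=|X|(m+1),$$ where $X$ is a minimum-cardinality vertex subset of $G$ such that $G-X$ is disconnected and every connected component of $G-X$ has at least $k+1$ vertices (i.e. $|X|=\kappa_k(G)$).
   Context: All graphs are finite and simple. The corona $G*H$ is obtained by taking one copy of $G$ and $|V(G)|$ disjoint copies of $H$, and joining every vertex of the $i$-th copy of $H$ to the $i$-th vertex of $G$, for $i=1,\ldots,|V(G)|$. A set $S\subseteq V(G)$ is a cutset if $G-S$ is disconnected. For a non-negative integer $g$, a cutset $S$ is an $R_g$-cutset if every connected component of $G-S$ has at least $g+1$ vertices. If $G$ has at least one $R_g$-cutset, the $g$-extra connectivity $\kappa_g(G)$ is the minimum cardinality of an $R_g$-cutset of $G$. *)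

theory Defs
  imports Main
begin

definition simple_graph :: "'a set \<Rightarrow> ('a \<times> 'a) set \<Rightarrow> bool" where
  "simple_graph V E \<longleftrightarrow> finite V \<and> E \<subseteq> V \<times> V \<and> sym E \<and> irrefl E"

definition reach_in :: "'a set \<Rightarrow> ('a \<times> 'a) set \<Rightarrow> 'a \<Rightarrow> 'a \<Rightarrow> bool" where
  "reach_in W E x y \<longleftrightarrow> (x, y) \<in> (E \<inter> (W \<times> W))\<^sup>*"

definition connected_graph :: "'a set \<Rightarrow> ('a \<times> 'a) set \<Rightarrow> bool" where
  "connected_graph V E \<longleftrightarrow> V \<noteq> {} \<and> (\<forall>x\<in>V. \<forall>y\<in>V. reach_in V E x y)"

definition component_of :: "'a set \<Rightarrow> ('a \<times> 'a) set \<Rightarrow> 'a \<Rightarrow> 'a set" where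
  "component_of W E x = {y \<in> W. reach_in W E x y}"

definition is_cutset :: "'a set \<Rightarrow> ('a \<times> 'a) set \<Rightarrow> 'a set \<Rightarrow> bool" where
  "is_cutset V E S \<longleftrightarrow> S \<subseteq> V \<and>
     (\<exists>x\<in>V - S. \<exists>y\<in>V - S. \<not> reach_in (V - S) E x y)"

definition is_Rg_cutset :: "nat \<Rightarrow> 'a set \<Rightarrow> ('a \<times> 'a) set \<Rightarrow> 'a set \<Rightarrow> bool" where
  "is_Rg_cutset g V E S \<longleftrightarrow> is_cutset V E S \<and>
     (\<forall>x\<in>V - S. card (component_of (V - S) E x) \<ge> g + 1)"

definition has_Rg_cutset :: "nat \<Rightarrow> 'a set \<Rightarrow> ('a \<times> 'a) set \<Rightarrow> bool" where
  "has_Rg_cutset g V E \<longleftrightarrow> (\<exists>S. is_Rg_cutset g V E S)"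

text \<open>g-extra connectivity (meaningful only when an R_g-cutset exists).\<close>
definition extra_conn :: "nat \<Rightarrow> 'a set \<Rightarrow> ('a \<times> 'a) set \<Rightarrow> nat" where
  "extra_conn g V E = Min (card ` {S. is_Rg_cutset g V E S})"

text \<open>Corona G*H: vertices Inl v (v in G) and Inr (v,h) (copy of h in the copy of H at v).\<close>
definition corona_V :: "'a set \<Rightarrow> 'b set \<Rightarrow> ('a + 'a \<times> 'b) set" where
  "corona_V VG VH = Inl ` VG \<union> Inr ` (VG \<times> VH)"

definition corona_E :: "'a set \<Rightarrow> ('a \<times> 'a) set \<Rightarrow> 'b set \<Rightarrow> ('b \<times> 'b) set
    \<Rightarrow> (('a + 'a \<times> 'b) \<times> ('a + 'a \<times> 'b)) set" where
  "corona_E VG EG VH EH =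
     {(Inl u, Inl v) | u v. (u, v) \<in> EG}
   \<union> {(Inr (v, a), Inr (v, b)) | v a b. v \<in> VG \<and> (a, b) \<in> EH}
   \<union> {(Inl v, Inr (v, h)) | v h. v \<in> VG \<and> h \<in> VH}
   \<union> {(Inr (v, h), Inl v) | v h. v \<in> VG \<and> h \<in> VH}"

end

theory Submission
  imports Defs
begin


lemma reach_in_refl: "reach_in W E x x" by (simp add: reach_in_def)

lemma reach_in_trans: "reach_in W E x y \<Longrightarrow> reach_in W E y z \<Longrightarrow> reach_in W E x z"
  unfolding reach_in_def by (meson rtrancl_trans)

lemma reach_in_step: "(x,y) \<in> E \<Longrightarrow> x \<in> W \<Longrightarrow> y \<in> W \<Longrightarrow> reach_in W E x y"
  unfolding reach_in_def by auto

lemma reach_in_sym: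
  assumes "sym E" "reach_in W E x y" shows "reach_in W E y x"
proof -
  have "(x,y) \<in> (E \<inter> W \<times> W)\<^sup>*" using assms(2) by (simp add: reach_in_def)
  then have "(y,x) \<in> (E \<inter> W \<times> W)\<^sup>*"
  proof (induction rule: rtrancl_induct)
    case base then show ?case by simp
  next
    case (step b c)
    then have "(c,b) \<in> E \<inter> W \<times> W" using assms(1) by (auto dest: symD)
    then show ?case using step(3) by (meson converse_rtrancl_into_rtrancl)
  qed
  then show ?thesis by (simp add: reach_in_def)
qed

lemma reach_in_closed:
  assumes "reach_in W E x y" "x \<in> A"
    "\<And>a b. (a,b)\<in>E \<Longrightarrow> a\<in>W \<Longrightarrow> b\<in>W \<Longrightarrow> a\<in>A \<Longrightarrow> b\<in>A"
  shows "y \<in> A"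
proof -
  have "(x,y) \<in> (E \<inter> W \<times> W)\<^sup>*" using assms(1) by (simp add: reach_in_def)
  then show ?thesis
    by (induction rule: rtrancl_induct) (use assms in auto)
qed

lemma reach_in_map:
  assumes "reach_in W E x y"
    "\<And>a b. (a,b)\<in>E \<Longrightarrow> a\<in>W \<Longrightarrow> b\<in>W \<Longrightarrow> (f a, f b) \<in> E' \<and> f a \<in> W' \<and> f b \<in> W'"
  shows "reach_in W' E' (f x) (f y)"
proof -
  have "(x,y) \<in> (E \<inter> W \<times> W)\<^sup>*" using assms(1) by (simp add: reach_in_def)
  then have "(f x, f y) \<in> (E' \<inter> W' \<times> W')\<^sup>*"
  proof (induction rule: rtrancl_induct)
    case base then show ?case by simp
  next
    case (step b c)
    then have "(f b, f c) \<in> E' \<inter> W' \<times> W'" using assms(2) by auto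
    then show ?case using step(3) by (meson rtrancl_into_rtrancl)
  qed
  then show ?thesis by (simp add: reach_in_def)
qed

lemma comp_sub_trans: "reach_in W E x y \<Longrightarrow> component_of W E y \<subseteq> component_of W E x"
  unfolding component_of_def using reach_in_trans by fastforce

lemma ce_LL[simp]: "(Inl u, Inl v) \<in> corona_E VG EG VH EH \<longleftrightarrow> (u,v) \<in> EG"
  by (auto simp: corona_E_def)
lemma ce_RR[simp]: "(Inr (v,a), Inr (w,b)) \<in> corona_E VG EG VH EH \<longleftrightarrow> v = w \<and> v \<in> VG \<and> (a,b) \<in> EH"
  by (auto simp: corona_E_def)
lemma ce_LR[simp]: "(Inl u, Inr (v,h)) \<in> corona_E VG EG VH EH \<longleftrightarrow> u = v \<and> v \<in> VG \<and> h \<in> VH"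
  by (auto simp: corona_E_def)
lemma ce_RL[simp]: "(Inr (v,h), Inl u) \<in> corona_E VG EG VH EH \<longleftrightarrow> u = v \<and> v \<in> VG \<and> h \<in> VH"
  by (auto simp: corona_E_def)
lemma cv_L[simp]: "Inl u \<in> corona_V VG VH \<longleftrightarrow> u \<in> VG"
  by (auto simp: corona_V_def)
lemma cv_R[simp]: "Inr (v,h) \<in> corona_V VG VH \<longleftrightarrow> v \<in> VG \<and> h \<in> VH"
  by (auto simp: corona_V_def)

lemma corona_sym: "sym EG \<Longrightarrow> sym EH \<Longrightarrow> sym (corona_E VG EG VH EH)"
  unfolding sym_def corona_E_def by blast

lemma lift_G:
  assumes "reach_in U EG u w" "Inl ` U \<subseteq> W"
  shows "reach_in W (corona_E VG EG VH EH) (Inl u) (Inl w)"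
  using reach_in_map[OF assms(1), of Inl "corona_E VG EG VH EH" W] assms(2) by auto

lemma lift_H:
  assumes "reach_in VH EH a b" "v \<in> VG" "Inr ` ({v} \<times> VH) \<subseteq> W"
  shows "reach_in W (corona_E VG EG VH EH) (Inr (v,a)) (Inr (v,b))"
  using reach_in_map[OF assms(1), of "\<lambda>a. Inr (v,a)" "corona_E VG EG VH EH" W] assms(2,3) by auto

lemma base_link1:
  "u \<in> VG \<Longrightarrow> h \<in> VH \<Longrightarrow> Inl u \<in> W \<Longrightarrow> Inr (u,h) \<in> W \<Longrightarrow>
    reach_in W (corona_E VG EG VH EH) (Inl u) (Inr (u,h))"
  by (rule reach_in_step) auto
lemma base_link2:
  "u \<in> VG \<Longrightarrow> h \<in> VH \<Longrightarrow> Inl u \<in> W \<Longrightarrow> Inr (u,h) \<in> W \<Longrightarrow>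
    reach_in W (corona_E VG EG VH EH) (Inr (u,h)) (Inl u)"
  by (rule reach_in_step) auto

lemma closure_copy:
  assumes "reach_in W (corona_E VG EG VH EH) (Inr (v,a)) x" "Inl v \<notin> W" "a \<in> VH"
    "EH \<subseteq> VH \<times> VH"
  shows "x \<in> Inr ` ({v} \<times> VH)"
proof (rule reach_in_closed[OF assms(1)])
  show "Inr (v, a) \<in> Inr ` ({v} \<times> VH)" using assms(3) by auto
next
  fix p q assume pq: "(p,q) \<in> corona_E VG EG VH EH" "p \<in> W" "q \<in> W" "p \<in> Inr ` ({v} \<times> VH)"
  then obtain c where p: "p = Inr (v,c)" by auto
  show "q \<in> Inr ` ({v} \<times> VH)"
  proof (cases q)
    case (Inl w) then show ?thesis using pq p assms(2) by auto
  next
    case (Inr r) then obtain w d where "q = Inr (w,d)" by (cases r) auto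
    then show ?thesis using pq p assms(4) by auto
  qed
qed

lemma closure_comp:
  assumes "reach_in W (corona_E VG EG VH EH) (Inl u) x" "u \<in> U"
    "\<And>w. Inl w \<in> W \<Longrightarrow> w \<in> U" "EH \<subseteq> VH \<times> VH"
  shows "x \<in> Inl ` component_of U EG u \<union> Inr ` (component_of U EG u \<times> VH)"
proof (rule reach_in_closed[OF assms(1)])
  show "Inl u \<in> Inl ` component_of U EG u \<union> Inr ` (component_of U EG u \<times> VH)"
    using assms(2) by (auto simp: component_of_def reach_in_refl)
next
  fix p q assume pq: "(p,q) \<in> corona_E VG EG VH EH" "p \<in> W" "q \<in> W"
    "p \<in> Inl ` component_of U EG u \<union> Inr ` (component_of U EG u \<times> VH)"
  show "q \<in> Inl ` component_of U EG u \<union> Inr ` (component_of U EG u \<times> VH)"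
  proof (cases p)
    case (Inl w)
    then have w: "w \<in> U" "reach_in U EG u w" using pq(4) by (auto simp: component_of_def)
    show ?thesis
    proof (cases q)
      case (Inl w')
      then have "(w,w') \<in> EG" "w' \<in> U" using pq \<open>p = Inl w\<close> assms(3) by auto
      then have "reach_in U EG u w'" using w reach_in_trans reach_in_step by metis
      then show ?thesis using Inl \<open>w' \<in> U\<close> by (auto simp: component_of_def)
    next
      case (Inr r) then obtain w' d where "q = Inr (w',d)" by (cases r) auto
      then show ?thesis using pq \<open>p = Inl w\<close> w by (auto simp: component_of_def)
    qed
  next
    case (Inr r) then obtain w c where p: "p = Inr (w,c)" by (cases r) auto
    then have w: "w \<in> component_of U EG u" using pq(4) by auto
    show ?thesis
    proof (cases q)
      case (Inl w')
      then show ?thesis using pq p w by auto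
    next
      case (Inr r) then obtain w' d where "q = Inr (w',d)" by (cases r) auto
      then show ?thesis using pq p w assms(4) by auto
    qed
  qed
qed

lemma card_blob:
  assumes "finite C" "finite VH"
  shows "card (Inl ` C \<union> Inr ` (C \<times> VH) :: ('a + 'a \<times> 'b) set) = card C * (card VH + 1)"
proof -
  have "card (Inl ` C \<union> Inr ` (C \<times> VH)) = card (Inl ` C :: ('a + 'a \<times> 'b) set) + card (Inr ` (C \<times> VH) :: ('a + 'a \<times> 'b) set)"
    by (rule card_Un_disjoint) (use assms in simp_all, blast)
  also have "\<dots> = card C + card C * card VH"
    by (simp add: card_image card_cartesian_product)
  finally show ?thesis by simp
qed

lemma blob_in_comp:
  assumes "Inl ` U \<subseteq> W" "Inr ` (U \<times> VH) \<subseteq> W" "u \<in> U" "U \<subseteq> VG"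
  shows "Inl ` component_of U EG u \<union> Inr ` (component_of U EG u \<times> VH)
     \<subseteq> component_of W (corona_E VG EG VH EH) (Inl u)"
proof
  fix x assume x: "x \<in> Inl ` component_of U EG u \<union> Inr ` (component_of U EG u \<times> VH)"
  then obtain w where w: "w \<in> U" "reach_in U EG u w" "x = Inl w \<or> (\<exists>h\<in>VH. x = Inr (w,h))"
    by (auto simp: component_of_def)
  have r: "reach_in W (corona_E VG EG VH EH) (Inl u) (Inl w)" using lift_G[OF w(2) assms(1)] .
  show "x \<in> component_of W (corona_E VG EG VH EH) (Inl u)"
  proof (cases "x = Inl w")
    case True then show ?thesis using r w assms by (auto simp: component_of_def)
  next
    case False
    then obtain h where h: "h \<in> VH" "x = Inr (w,h)" using w by auto
    have "reach_in W (corona_E VG EG VH EH) (Inl w) (Inr (w,h))"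
      by (rule base_link1) (use h w assms in auto)
    then have "reach_in W (corona_E VG EG VH EH) (Inl u) (Inr (w,h))" by (rule reach_in_trans[OF r])
    moreover have "Inr (w,h) \<in> W" using assms(2) h w by blast
    ultimately show ?thesis using h by (simp add: component_of_def)
  qed
qed

lemma copy_in_comp:
  fixes w :: 'a and VH :: "'b set"
  assumes "w \<in> VG" "Inr ` ({w} \<times> VH) \<subseteq> W" "h1 \<in> VH" "\<forall>a\<in>VH. \<forall>b\<in>VH. reach_in VH EH a b"
  shows "Inr ` ({w} \<times> VH) \<subseteq> component_of W (corona_E VG EG VH EH) (Inr (w,h1))"
proof
  fix x :: "'a + 'a \<times> 'b" assume "x \<in> Inr ` ({w} \<times> VH)"
  then obtain b where b: "b \<in> VH" "x = Inr (w,b)" by auto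
  have "reach_in W (corona_E VG EG VH EH) (Inr (w,h1)) (Inr (w,b))"
    by (rule lift_H) (use assms b in auto)
  then show "x \<in> component_of W (corona_E VG EG VH EH) (Inr (w,h1))"
    using b assms by (auto simp: component_of_def)
qed



lemma corona_conn:
  assumes "\<forall>x\<in>VG. \<forall>y\<in>VG. reach_in VG EG x y" "v \<in> VG" "x \<in> corona_V VG VH"
  shows "reach_in (corona_V VG VH) (corona_E VG EG VH EH) x (Inl v)"
proof -
  have L: "reach_in (corona_V VG VH) (corona_E VG EG VH EH) (Inl w) (Inl v)" if "w \<in> VG" for w
    by (rule lift_G) (use assms that in auto)
  show ?thesis
  proof (cases x)
    case (Inl w) then show ?thesis using L assms by auto
  next
    case (Inr r) then obtain w h where r: "x = Inr (w,h)" by (cases r) auto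
    then have "w \<in> VG" "h \<in> VH" using assms by auto
    then have "reach_in (corona_V VG VH) (corona_E VG EG VH EH) (Inr (w,h)) (Inl w)"
      by (intro base_link2) auto
    then show ?thesis using L[OF \<open>w \<in> VG\<close>] r reach_in_trans by metis
  qed
qed

theorem theorem2p2:
  fixes VG :: "'a set" and EG :: "('a \<times> 'a) set"
    and VH :: "'b set" and EH :: "('b \<times> 'b) set"
    and n m :: nat
  assumes "simple_graph VG EG" and "connected_graph VG EG"
    and "simple_graph VH EH" and "connected_graph VH EH"
    and "n = card VG" and "n \<ge> 2"
    and "m = card VH" and "m \<ge> 1"
  shows "(\<forall>g::nat. g \<le> m - 1 \<longrightarrow>
            has_Rg_cutset g (corona_V VG VH) (corona_E VG EG VH EH) \<and>
            extra_conn g (corona_V VG VH) (corona_E VG EG VH EH) = 1)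
       \<and> (\<forall>k g :: nat. k \<ge> 1 \<longrightarrow> has_Rg_cutset k VG EG \<longrightarrow>
            k * (m + 1) < g + 1 \<longrightarrow> g + 1 \<le> (k + 1) * (m + 1) \<longrightarrow>
            has_Rg_cutset g (corona_V VG VH) (corona_E VG EG VH EH) \<and>
            extra_conn g (corona_V VG VH) (corona_E VG EG VH EH)
              = extra_conn k VG EG * (m + 1))"
proof -
  let ?V = "corona_V VG VH" and ?E = "corona_E VG EG VH EH"
  have fG: "finite VG" and EGs: "EG \<subseteq> VG \<times> VG" and sG: "sym EG"
    using assms(1) by (auto simp: simple_graph_def)
  have fH: "finite VH" and EHs: "EH \<subseteq> VH \<times> VH" and sH: "sym EH"
    using assms(3) by (auto simp: simple_graph_def)
  have cG: "\<forall>x\<in>VG. \<forall>y\<in>VG. reach_in VG EG x y" and neG: "VG \<noteq> {}"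
    using assms(2) by (auto simp: connected_graph_def)
  have cH: "\<forall>x\<in>VH. \<forall>y\<in>VH. reach_in VH EH x y" and neH: "VH \<noteq> {}"
    using assms(4) by (auto simp: connected_graph_def)
  have fV: "finite ?V" using fG fH by (simp add: corona_V_def)
  have sE: "sym ?E" using sG sH by (rule corona_sym)
  have fin_cuts: "finite (card ` {S. is_Rg_cutset g' V' E' S})" if "finite V'" for g' V' and E' :: "('c\<times>'c) set"
  proof -
    have "{S. is_Rg_cutset g' V' E' S} \<subseteq> Pow V'" by (auto simp: is_Rg_cutset_def is_cutset_def)
    then show ?thesis using that by (meson finite_Pow_iff finite_imageI finite_subset)
  qed
  have comp_fin: "finite (component_of W E' x)" if "finite W" for W and E' :: "('c\<times>'c) set" and x
    using that by (simp add: component_of_def)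
  have mpos: "m \<ge> 1" using assms(8) by simp
  have P1: "has_Rg_cutset g ?V ?E \<and> extra_conn g ?V ?E = 1" if g: "g \<le> m - 1" for g
  proof -
    obtain v where v: "v \<in> VG" using neG by auto
    have "\<exists>u\<in>VG. u \<noteq> v"
    proof (rule ccontr)
      assume "\<not> ?thesis" then have "VG \<subseteq> {v}" by auto
      then have "card VG \<le> card {v}" by (intro card_mono) simp_all
      then have "card VG \<le> 1" by simp
      then show False using assms(5,6) by simp
    qed
    then obtain u where u: "u \<in> VG" "u \<noteq> v" by auto
    obtain h0 where h0: "h0 \<in> VH" using neH by auto
    let ?S = "{Inl v} :: ('a + 'a \<times> 'b) set"
    have copyW: "Inr ` ({w} \<times> VH) \<subseteq> ?V - ?S" if "w \<in> VG" for w using that by auto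
    have cut: "is_Rg_cutset g ?V ?E ?S"
      unfolding is_Rg_cutset_def is_cutset_def
    proof (intro conjI)
      show "?S \<subseteq> ?V" using v by simp
      show "\<exists>x\<in>?V - ?S. \<exists>y\<in>?V - ?S. \<not> reach_in (?V - ?S) ?E x y"
      proof (intro bexI)
        show "\<not> reach_in (?V - ?S) ?E (Inr (v,h0)) (Inl u)"
          using closure_copy[of "?V - ?S" VG EG VH EH v h0 "Inl u"] h0 EHs by auto
      qed (use v u h0 in auto)
      show "\<forall>x\<in>?V - ?S. g + 1 \<le> card (component_of (?V - ?S) ?E x)"
      proof
        fix x assume x: "x \<in> ?V - ?S"
        obtain w h1 where w: "w \<in> VG" "h1 \<in> VH" and
          r: "reach_in (?V - ?S) ?E x (Inr (w,h1))"
        proof (cases x)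
          case (Inl w)
          then have "w \<in> VG" "w \<noteq> v" using x by auto
          then have "reach_in (?V - ?S) ?E x (Inr (w,h0))"
            using Inl h0 by (intro reach_in_step) auto
          then show ?thesis using that \<open>w \<in> VG\<close> h0 by blast
        next
          case (Inr r) then obtain w h where xw: "x = Inr (w,h)" by (cases r) auto
          then have "w \<in> VG" "h \<in> VH" using x by auto
          then show ?thesis by (rule that[of w h]) (simp_all add: xw reach_in_refl)
        qed
        have sub: "Inr ` ({w} \<times> VH) \<subseteq> component_of (?V - ?S) ?E x"
          using copy_in_comp[OF w(1) copyW[OF w(1)] w(2) cH] comp_sub_trans[OF r] by blast
        have "card (Inr ` ({w} \<times> VH) :: ('a + 'a \<times> 'b) set) \<le> card (component_of (?V - ?S) ?E x)"
          by (rule card_mono[OF comp_fin[OF finite_Diff[OF fV]] sub])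
        moreover have "card (Inr ` ({w} \<times> VH) :: ('a + 'a \<times> 'b) set) = m"
          using assms(7) by (simp add: card_image card_cartesian_product)
        ultimately have "m \<le> card (component_of (?V - ?S) ?E x)"
          by simp
        then show "g + 1 \<le> card (component_of (?V - ?S) ?E x)" using g mpos by linarith
      qed
    qed
    have ge1: "1 \<le> card S" if S: "is_Rg_cutset g ?V ?E S" for S
    proof -
      have Ssub: "S \<subseteq> ?V" using S by (simp add: is_Rg_cutset_def is_cutset_def)
      have "S \<noteq> {}"
      proof
        assume "S = {}"
        then obtain x y where xy: "x \<in> ?V" "y \<in> ?V" "\<not> reach_in ?V ?E x y"
          using S by (auto simp: is_Rg_cutset_def is_cutset_def)
        have rx: "reach_in ?V ?E x (Inl v)" by (rule corona_conn[OF cG v xy(1)])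
        have ry: "reach_in ?V ?E y (Inl v)" by (rule corona_conn[OF cG v xy(2)])
        have "reach_in ?V ?E (Inl v) y" by (rule reach_in_sym[OF sE ry])
        then have "reach_in ?V ?E x y" by (rule reach_in_trans[OF rx])
        then show False using xy(3) by contradiction
      qed
      then show ?thesis using Ssub fV by (meson card_0_eq finite_subset less_one not_le)
    qed
    have "card ?S \<in> card ` {S. is_Rg_cutset g ?V ?E S}" using cut by blast
    then have one: "1 \<in> card ` {S. is_Rg_cutset g ?V ?E S}" by simp
    have "extra_conn g ?V ?E = 1"
      unfolding extra_conn_def
      by (rule Min_eqI[OF fin_cuts[OF fV] _ one]) (use ge1 in blast)
    then show ?thesis using cut by (auto simp: has_Rg_cutset_def)
  qed
  have P2: "has_Rg_cutset g ?V ?E \<and> extra_conn g ?V ?E = extra_conn k VG EG * (m + 1)"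
    if k: "k \<ge> 1" "has_Rg_cutset k VG EG" "k * (m + 1) < g + 1" "g + 1 \<le> (k + 1) * (m + 1)"
    for k g
  proof -
    have "extra_conn k VG EG \<in> card ` {S. is_Rg_cutset k VG EG S}"
      unfolding extra_conn_def
      by (rule Min_in) (use fin_cuts[OF fG] k(2) in \<open>auto simp: has_Rg_cutset_def\<close>)
    then obtain X where X: "is_Rg_cutset k VG EG X" "card X = extra_conn k VG EG" by auto
    have Xmin: "card X \<le> card T" if "is_Rg_cutset k VG EG T" for T
      unfolding X(2) extra_conn_def using fin_cuts[OF fG] that by auto
    have XV: "X \<subseteq> VG" using X by (simp add: is_Rg_cutset_def is_cutset_def)
    let ?S = "Inl ` X \<union> Inr ` (X \<times> VH) :: ('a + 'a \<times> 'b) set"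
    have VS: "?V - ?S = Inl ` (VG - X) \<union> Inr ` ((VG - X) \<times> VH)"
      unfolding corona_V_def by blast
    have cut: "is_Rg_cutset g ?V ?E ?S"
      unfolding is_Rg_cutset_def is_cutset_def
    proof (intro conjI)
      show "?S \<subseteq> ?V" using XV unfolding corona_V_def by blast
      obtain u w where uw: "u \<in> VG - X" "w \<in> VG - X" "\<not> reach_in (VG - X) EG u w"
        using X(1) by (auto simp: is_Rg_cutset_def is_cutset_def)
      show "\<exists>x\<in>?V - ?S. \<exists>y\<in>?V - ?S. \<not> reach_in (?V - ?S) ?E x y"
      proof (intro bexI)
        show "\<not> reach_in (?V - ?S) ?E (Inl u) (Inl w)"
        proof
          assume "reach_in (?V - ?S) ?E (Inl u) (Inl w)"
          have inU: "\<And>w'. Inl w' \<in> ?V - ?S \<Longrightarrow> w' \<in> VG - X" using VS by blast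
          have "Inl w \<in> Inl ` component_of (VG - X) EG u \<union> Inr ` (component_of (VG - X) EG u \<times> VH)"
            by (rule closure_comp[OF \<open>reach_in (?V - ?S) ?E (Inl u) (Inl w)\<close> uw(1) inU EHs])
          then have "w \<in> component_of (VG - X) EG u" by blast
          then show False using uw by (simp add: component_of_def)
        qed
      qed (use uw in auto)
      show "\<forall>x\<in>?V - ?S. g + 1 \<le> card (component_of (?V - ?S) ?E x)"
      proof
        fix x assume x: "x \<in> ?V - ?S"
        have LX: "Inl ` (VG - X) \<subseteq> ?V - ?S" and RX: "Inr ` ((VG - X) \<times> VH) \<subseteq> ?V - ?S"
          using VS by blast+
        obtain b where b: "b \<in> VG - X" and r: "reach_in (?V - ?S) ?E x (Inl b)"
        proof (cases x)
          case (Inl w)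
          then have "w \<in> VG - X" using x VS by blast
          then show ?thesis by (rule that) (simp add: Inl reach_in_refl)
        next
          case (Inr r) then obtain w h where xw: "x = Inr (w,h)" by (cases r) auto
          then have wh: "w \<in> VG - X" "h \<in> VH" using x VS by auto
          have "Inl w \<in> ?V - ?S" using LX wh by blast
          then have "reach_in (?V - ?S) ?E (Inr (w,h)) (Inl w)"
            using wh x xw by (intro base_link2) auto
          then show ?thesis using that \<open>w \<in> VG - X\<close> xw by blast
        qed
        let ?C = "component_of (VG - X) EG b"
        have Cb: "k + 1 \<le> card ?C" using X(1) b by (auto simp: is_Rg_cutset_def)
        have fC: "finite ?C" by (rule comp_fin) (use fG in simp)
        have "Inl ` ?C \<union> Inr ` (?C \<times> VH) \<subseteq> component_of (?V - ?S) ?E (Inl b)"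
          by (rule blob_in_comp[OF LX RX b]) blast
        also have "\<dots> \<subseteq> component_of (?V - ?S) ?E x" by (rule comp_sub_trans[OF r])
        finally have sub: "Inl ` ?C \<union> Inr ` (?C \<times> VH) \<subseteq> component_of (?V - ?S) ?E x" .
        have "card (Inl ` ?C \<union> Inr ` (?C \<times> VH) :: ('a + 'a \<times> 'b) set) \<le> card (component_of (?V - ?S) ?E x)"
          by (rule card_mono[OF comp_fin[OF finite_Diff[OF fV]] sub])
        moreover have "card (Inl ` ?C \<union> Inr ` (?C \<times> VH) :: ('a + 'a \<times> 'b) set) = card ?C * (m+1)"
          using card_blob[OF fC fH] assms(7) by simp
        ultimately have "card ?C * (m+1) \<le> card (component_of (?V - ?S) ?E x)"
          by simp
        moreover have "(k+1) * (m+1) \<le> card ?C * (m+1)" by (rule mult_le_mono1[OF Cb])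
        ultimately show "g + 1 \<le> card (component_of (?V - ?S) ?E x)" using k(4) by linarith
      qed
    qed
    have cardS: "card ?S = card X * (m+1)"
      using card_blob[OF finite_subset[OF XV fG] fH] assms(7) by simp
    have lower: "card X * (m+1) \<le> card S" if S: "is_Rg_cutset g ?V ?E S" for S
    proof -
      have Ssub: "S \<subseteq> ?V" using S by (simp add: is_Rg_cutset_def is_cutset_def)
      have fS: "finite S" using Ssub fV finite_subset by blast
      have Scomp: "g + 1 \<le> card (component_of (?V - S) ?E x)" if "x \<in> ?V - S" for x
        using S that unfolding is_Rg_cutset_def by blast
      define T where "T = {v\<in>VG. Inl v \<in> S}"
      have gm: "m < g + 1"
      proof -
        have "1 * (m + 1) \<le> k * (m+1)" by (rule mult_le_mono1[OF k(1)])
        then have "m + 1 \<le> k * (m+1)" by simp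
        have "m + 1 < g + 1" by (rule le_less_trans[OF \<open>m + 1 \<le> k * (m+1)\<close> k(3)])
        then show ?thesis by simp
      qed
      have A: "Inr (v,h) \<in> S" if "v \<in> T" "h \<in> VH" for v h
      proof (rule ccontr)
        assume "Inr (v,h) \<notin> S"
        then have x: "Inr (v,h) \<in> ?V - S" using that T_def by auto
        have nv: "Inl v \<notin> ?V - S" using that T_def by blast
        have "component_of (?V - S) ?E (Inr (v,h)) \<subseteq> Inr ` ({v} \<times> VH)"
        proof
          fix y assume "y \<in> component_of (?V - S) ?E (Inr (v,h))"
          then have "reach_in (?V - S) ?E (Inr (v,h)) y" by (simp add: component_of_def)
          then show "y \<in> Inr ` ({v} \<times> VH)" by (rule closure_copy[OF _ nv that(2) EHs])
        qed
        then have "card (component_of (?V - S) ?E (Inr (v,h))) \<le> card (Inr ` ({v} \<times> VH) :: ('a + 'a \<times> 'b) set)"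
          by (rule card_mono[rotated]) (use fH in simp)
        also have "\<dots> = m" using assms(7) by (simp add: card_image card_cartesian_product)
        finally show False using Scomp[OF x] gm by linarith
      qed
      have TV: "T \<subseteq> VG" unfolding T_def by blast
      have "Inl ` T \<union> Inr ` (T \<times> VH) \<subseteq> S" using A unfolding T_def by blast
      then have "card (Inl ` T \<union> Inr ` (T \<times> VH) :: ('a + 'a \<times> 'b) set) \<le> card S"
        using fS by (rule card_mono[rotated])
      then have cT: "card T * (m+1) \<le> card S"
        using card_blob[OF finite_subset[OF TV fG] fH] assms(7) by simp
      have inW: "\<And>w. Inl w \<in> ?V - S \<Longrightarrow> w \<in> VG - T" by (simp add: T_def)
      have LW: "Inl ` (VG - T) \<subseteq> ?V - S"
      proof
        fix x :: "'a + 'a \<times> 'b" assume "x \<in> Inl ` (VG - T)"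
        then obtain w where "w \<in> VG - T" "x = Inl w" by blast
        then show "x \<in> ?V - S" by (simp add: T_def)
      qed
      have base: "\<exists>b\<in>VG - T. reach_in (?V - S) ?E z (Inl b) \<and> reach_in (?V - S) ?E (Inl b) z"
        if z: "z \<in> ?V - S" for z
      proof (cases z)
        case (Inl w)
        then have "w \<in> VG - T" using z inW by simp
        then show ?thesis unfolding Inl by (intro bexI[of _ w]) (simp_all add: reach_in_refl)
      next
        case (Inr r) then obtain w h where zw: "z = Inr (w,h)" by (cases r) auto
        then have wh: "w \<in> VG" "h \<in> VH" using z by auto
        have "w \<notin> T" using A[of w h] wh z zw by blast
        then have lw: "Inl w \<in> ?V - S" using wh T_def by simp
        have zz: "Inr (w,h) \<in> ?V - S" using z zw by simp
        have "reach_in (?V - S) ?E z (Inl w)"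
          unfolding zw by (rule base_link2[OF wh lw zz])
        moreover have "reach_in (?V - S) ?E (Inl w) z"
          unfolding zw by (rule base_link1[OF wh lw zz])
        ultimately have "reach_in (?V - S) ?E z (Inl w) \<and> reach_in (?V - S) ?E (Inl w) z" by blast
        then show ?thesis using wh \<open>w \<notin> T\<close> by blast
      qed
      have Tcut: "is_Rg_cutset k VG EG T"
        unfolding is_Rg_cutset_def is_cutset_def
      proof (intro conjI)
        show "T \<subseteq> VG" by (rule TV)
        obtain x y where xy: "x \<in> ?V - S" "y \<in> ?V - S" "\<not> reach_in (?V - S) ?E x y"
          using S by (auto simp: is_Rg_cutset_def is_cutset_def)
        obtain bx where bx: "bx \<in> VG - T" "reach_in (?V - S) ?E x (Inl bx)"
          using base[OF xy(1)] by blast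
        obtain by' where by': "by' \<in> VG - T" "reach_in (?V - S) ?E (Inl by') y"
          using base[OF xy(2)] by blast
        have "\<not> reach_in (VG - T) EG bx by'"
        proof
          assume "reach_in (VG - T) EG bx by'"
          from lift_G[OF this LW] have "reach_in (?V - S) ?E (Inl bx) (Inl by')" .
          then have "reach_in (?V - S) ?E x (Inl by')" by (rule reach_in_trans[OF bx(2)])
          then have "reach_in (?V - S) ?E x y" by (rule reach_in_trans[OF _ by'(2)])
          then show False using xy(3) by contradiction
        qed
        then show "\<exists>x\<in>VG - T. \<exists>y\<in>VG - T. \<not> reach_in (VG - T) EG x y" using bx by' by blast
        show "\<forall>x\<in>VG - T. k + 1 \<le> card (component_of (VG - T) EG x)"
        proof
          fix u assume u: "u \<in> VG - T"
          let ?C = "component_of (VG - T) EG u"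
          have fC: "finite ?C" by (rule comp_fin) (use fG in simp)
          have "component_of (?V - S) ?E (Inl u) \<subseteq> Inl ` ?C \<union> Inr ` (?C \<times> VH)"
          proof
            fix y assume "y \<in> component_of (?V - S) ?E (Inl u)"
            then have "reach_in (?V - S) ?E (Inl u) y" by (simp add: component_of_def)
            then show "y \<in> Inl ` ?C \<union> Inr ` (?C \<times> VH)" by (rule closure_comp[OF _ u inW EHs])
          qed
          then have "card (component_of (?V - S) ?E (Inl u)) \<le> card (Inl ` ?C \<union> Inr ` (?C \<times> VH) :: ('a + 'a \<times> 'b) set)"
            by (rule card_mono[rotated]) (use fC fH in simp)
          also have "\<dots> = card ?C * (m+1)"
            using card_blob[OF fC fH] assms(7) by simp
          finally have c1: "card (component_of (?V - S) ?E (Inl u)) \<le> card ?C * (m+1)" .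
          have "Inl u \<in> ?V - S" using u T_def by simp
          then have c2: "g + 1 \<le> card (component_of (?V - S) ?E (Inl u))" by (rule Scomp)
          have "k * (m+1) < card ?C * (m+1)"
            using k(3) c2 c1 by linarith
          then have "k < card ?C" by (rule mult_right_less_imp_less) simp
          then show "k + 1 \<le> card ?C" by simp
        qed
      qed
      have "card X * (m+1) \<le> card T * (m+1)" by (rule mult_le_mono1[OF Xmin[OF Tcut]])
      then show ?thesis using cT by linarith
    qed
    have "card ?S \<in> card ` {S. is_Rg_cutset g ?V ?E S}" using cut by blast
    then have mem: "card X * (m+1) \<in> card ` {S. is_Rg_cutset g ?V ?E S}" by (simp only: cardS)
    have "extra_conn g ?V ?E = card X * (m+1)"
      unfolding extra_conn_def
      by (rule Min_eqI[OF fin_cuts[OF fV] _ mem]) (use lower in blast)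
    then show ?thesis using cut X(2) by (auto simp: has_Rg_cutset_def)
  qed
  show ?thesis
    apply (rule conjI)
     apply (intro allI impI)
     apply (rule P1, assumption)
    apply (intro allI impI)
    apply (rule P2; assumption)
    done
qed

end
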